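(* Let $Q$ be a finite quiver without loops or oriented 2-cycles, with vertices labelled $1,\dots,n$, of which $1,\dots,m$ are mutable. Then the cluster algebra associated to $Q$ can be quantized: there exists a quiver $Q'$ containing $Q$ as a full subquiver, whose principal part (full subquiver on the mutable vertices) coincides with that of $Q$, together with a skew-symmetric integer matrix $\Lambda$ compatible with $Q'$.
   Context: For a quiver with vertices $1,\dots,N$ of which $1,\dots,m$ are mutable and the rest frozen, let $a_{ij}$ be the number of arrows from $i$ to $j$ and $\tilde B$ the $N\times m$ matrix with $b_{ij}=a_{ji}-a_{ij}$. A skew-symmetric $N\times N$ integer matrix $\Lambda$ is compatible with the quiver if $\tilde B^T\Lambda=\tilde I$, where $\tilde I$ is the $m\times N$ matrix whose first $m$ columns form the identity $I_m$ and whose other columns are zero. In $Q'$ the added vertices are frozen. *)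

theory Defs
  imports Main
begin

text \<open>A quiver on vertices 1..N is given by arrow counts a i j (number of arrows i to j);
  values outside 1..N are irrelevant.\<close>

definition no_loops_no_2cycles :: "nat \<Rightarrow> (nat \<Rightarrow> nat \<Rightarrow> nat) \<Rightarrow> bool" where
  "no_loops_no_2cycles N a \<longleftrightarrow>
     (\<forall>i\<in>{1..N}. a i i = 0) \<and> (\<forall>i\<in>{1..N}. \<forall>j\<in>{1..N}. a i j = 0 \<or> a j i = 0)"

definition bmat :: "(nat \<Rightarrow> nat \<Rightarrow> nat) \<Rightarrow> nat \<Rightarrow> nat \<Rightarrow> int" where
  "bmat a i j = int (a j i) - int (a i j)"

definition skew_symmetric_on :: "nat \<Rightarrow> (nat \<Rightarrow> nat \<Rightarrow> int) \<Rightarrow> bool" where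
  "skew_symmetric_on N L \<longleftrightarrow> (\<forall>i\<in>{1..N}. \<forall>j\<in>{1..N}. L j i = - L i j)"

text \<open>Compatibility: B~^T Lambda = I~ where B~ is the N x m matrix and I~ the m x N matrix
  (identity in the first m columns, zero elsewhere).\<close>
definition compatible :: "nat \<Rightarrow> nat \<Rightarrow> (nat \<Rightarrow> nat \<Rightarrow> nat) \<Rightarrow> (nat \<Rightarrow> nat \<Rightarrow> int) \<Rightarrow> bool" where
  "compatible N m a L \<longleftrightarrow> skew_symmetric_on N L \<and>
     (\<forall>j\<in>{1..m}. \<forall>k\<in>{1..N}.
        (\<Sum>i=1..N. bmat a i j * L i k) = (if k \<le> m \<and> k = j then 1 else 0))"

end

theory Submission
  imports Defs
begin

theorem lemma4p4:
  fixes n m :: nat and a :: "nat \<Rightarrow> nat \<Rightarrow> nat"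
  assumes "m \<le> n"
    and "no_loops_no_2cycles n a"
  shows "\<exists>N' a' L. n \<le> N' \<and> no_loops_no_2cycles N' a'
           \<and> (\<forall>i\<in>{1..n}. \<forall>j\<in>{1..n}. a' i j = a i j)
           \<and> compatible N' m a' L"
proof -
  define a' where "a' = (\<lambda>i j. if i \<le> n \<and> j \<le> n then a i j
      else if n < i \<and> i \<le> n + m \<and> j = i - n then 1 else (0::nat))"
  define L where "L = (\<lambda>i k. if i \<le> n \<and> k \<le> n then 0
      else if i \<le> n then (if i = k - n then 1 else 0)
      else if k \<le> n then (if k = i - n then -1 else 0)
      else bmat a (k - n) (i - n))"
  have nl: "no_loops_no_2cycles (n+m) a'"
    using assms unfolding no_loops_no_2cycles_def a'_def by auto
  have sk: "skew_symmetric_on (n+m) L"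
    unfolding skew_symmetric_on_def L_def bmat_def by auto
  have eq: "(\<Sum>i=1..n+m. bmat a' i j * L i k) = (if k \<le> m \<and> k = j then 1 else 0)"
    if j: "j \<in> {1..m}" and k: "k \<in> {1..n+m}" for j k
  proof -
    have split: "{1..n+m} = {1..n} \<union> {n+1..n+m}" by auto
    have s: "(\<Sum>i=1..n+m. bmat a' i j * L i k) =
        (\<Sum>i=1..n. bmat a' i j * L i k) + (\<Sum>i=n+1..n+m. bmat a' i j * L i k)"
      unfolding split by (rule sum.union_disjoint) auto
    have s2: "(\<Sum>i=n+1..n+m. bmat a' i j * L i k) =
        (\<Sum>i=n+1..n+m. if i = n + j then - L (n+j) k else 0)"
      apply (rule sum.cong, simp)
      using j assms(1) by (auto simp: bmat_def a'_def)
    have s2': "(\<Sum>i=n+1..n+m. bmat a' i j * L i k) = - L (n+j) k"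
      unfolding s2 using j by (simp add: sum.delta sum.delta')
    show ?thesis
    proof (cases "k \<le> n")
      case True
      have "(\<Sum>i=1..n. bmat a' i j * L i k) = 0"
        by (rule sum.neutral) (use True in \<open>auto simp: L_def\<close>)
      then show ?thesis using s s2' True j assms(1) by (auto simp: L_def)
    next
      case False
      have s1: "(\<Sum>i=1..n. bmat a' i j * L i k) =
          (\<Sum>i=1..n. if i = k - n then bmat a (k-n) j else 0)"
        apply (rule sum.cong, simp)
        using False j k assms(1) by (auto simp: bmat_def a'_def L_def)
      have "(\<Sum>i=1..n. bmat a' i j * L i k) = bmat a (k-n) j"
        unfolding s1 using False k assms(1) by (simp add: sum.delta sum.delta'; linarith)
      then show ?thesis using s s2' False j k assms(1) by (auto simp: L_def)
    qed
  qed
  have "compatible (n+m) m a' L"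
    unfolding compatible_def using sk eq by blast
  moreover have "\<forall>i\<in>{1..n}. \<forall>j\<in>{1..n}. a' i j = a i j" by (auto simp: a'_def)
  ultimately show ?thesis using nl by (intro exI[of _ "n+m"] exI[of _ a'] exI[of _ L]) auto
qed

end
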